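(* For unitary modified types $\boldsymbol\mu,\boldsymbol\nu,\boldsymbol\lambda$: $r_{\boldsymbol\mu,\boldsymbol\nu}^{\boldsymbol\lambda}=0$ whenever $|\boldsymbol\lambda|>|\boldsymbol\mu|+|\boldsymbol\nu|$, and whenever $|\boldsymbol\lambda|=|\boldsymbol\mu|+|\boldsymbol\nu|$ the polynomial $r_{\boldsymbol\mu,\boldsymbol\nu}^{\boldsymbol\lambda}$ is a constant lying in $\mathbb{Z}$. Equivalently, the algebra with basis $\{K_{\boldsymbol\mu}\}$ over $\mathcal{R}_{-q}$ and multiplication $K_{\boldsymbol\mu}K_{\boldsymbol\nu}=\sum_{\boldsymbol\lambda}r_{\boldsymbol\mu,\boldsymbol\nu}^{\boldsymbol\lambda}K_{\boldsymbol\lambda}$ is filtered with $K_{\boldsymbol\mu}$ in degree $|\boldsymbol\mu|$, and its associated graded algebra has integer structure constants.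
   Context: $q$ is a fixed prime power, $\sigma(z)=z^q$ on $\mathbb{F}_{q^2}$. $U_n(\mathbb{F}_q)=\{g\in GL_n(\mathbb{F}_{q^2}): g^T\sigma(g)=\mathrm{Id}\}$, embedded in $U_{n+1}(\mathbb{F}_q)$ by $g\mapsto\operatorname{diag}(g,1)$. Elements $g\in U_n(\mathbb{F}_q)$, $g'\in U_{n'}(\mathbb{F}_q)$ have the same unitary modified type if for some $N\ge n,n'$ their images in $U_N(\mathbb{F}_q)$ are conjugate in $U_N(\mathbb{F}_q)$; a unitary modified type is such an equivalence class, with size $|\boldsymbol\mu|=\operatorname{rank}(g-\mathrm{Id})$ for $g$ in the class. $X_{\boldsymbol\mu,n}$ is the sum of all elements of $U_n(\mathbb{F}_q)$ of modified type $\boldsymbol\mu$. $[n]_{-q}=((-q)^n-1)/(-q-1)$; $\mathcal{R}_{-q}$ is the $\mathbb{Z}[q,q^{-1}]$-span in $\mathbb{Q}[x]$ of $\binom{x}{k}_{-q}=\frac{x(x-[1]_{-q})\cdots(x-[k-1]_{-q})}{(-q)^{k(k-1)/2}[k]_{-q}!}$. The polynomials $r_{\boldsymbol\mu,\boldsymbol\nu}^{\boldsymbol\lambda}\in\mathcal{R}_{-q}$ are those with $X_{\boldsymbol\mu,n}X_{\boldsymbol\nu,n}=\sum_{\boldsymbol\lambda}r_{\boldsymbol\mu,\boldsymbol\nu}^{\boldsymbol\lambda}([n]_{-q})X_{\boldsymbol\lambda,n}$ for all $n\ge0$. *)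

theory Defs
  imports "Jordan_Normal_Form.DL_Rank" "HOL-Computational_Algebra.Polynomial"
          "HOL-Computational_Algebra.Primes"
begin

text \<open>Throughout, the finite field F_{q^2} is a finite field type 'a with CARD('a) = q^2,
  and the Frobenius is sigma z = z^q.\<close>

definition prime_power :: "nat \<Rightarrow> bool" where
  "prime_power q \<longleftrightarrow> (\<exists>p k. prime p \<and> k > 0 \<and> q = p ^ k)"

definition frob :: "nat \<Rightarrow> 'a::field mat \<Rightarrow> 'a mat" where
  "frob q g = map_mat (\<lambda>z. z ^ q) g"

definition unitary_group :: "nat \<Rightarrow> nat \<Rightarrow> 'a::field mat set" where
  "unitary_group q n = {g \<in> carrier_mat n n. invertible_mat g \<and>
      transpose_mat g * frob q g = 1\<^sub>m n}"

text \<open>Embedding U_n into U_N via g \<mapsto> diag(g, Id_{N-n}) (iterate of g \<mapsto> diag(g,1)).\<close>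
definition embed_mat :: "nat \<Rightarrow> nat \<Rightarrow> 'a::field mat \<Rightarrow> 'a mat" where
  "embed_mat n N g = four_block_mat g (0\<^sub>m n (N - n)) (0\<^sub>m (N - n) n) (1\<^sub>m (N - n))"

definition conj_in :: "'a::field mat set \<Rightarrow> 'a mat \<Rightarrow> 'a mat \<Rightarrow> bool" where
  "conj_in G a b \<longleftrightarrow> (\<exists>h\<in>G. \<exists>hi\<in>G. h * hi = 1\<^sub>m (dim_row h) \<and> h * a * hi = b)"

definition same_utype :: "nat \<Rightarrow> nat \<times> 'a::field mat \<Rightarrow> nat \<times> 'a mat \<Rightarrow> bool" where
  "same_utype q x y \<longleftrightarrow> (case x of (n, g) \<Rightarrow> case y of (n', g') \<Rightarrow>
      g \<in> unitary_group q n \<and> g' \<in> unitary_group q n' \<and>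
      (\<exists>N \<ge> max n n'. conj_in (unitary_group q N) (embed_mat n N g) (embed_mat n' N g')))"

definition utype :: "nat \<Rightarrow> nat \<Rightarrow> 'a::field mat \<Rightarrow> (nat \<times> 'a mat) set" where
  "utype q n g = {y. same_utype q (n, g) y}"

definition utypes :: "nat \<Rightarrow> 'a::field itself \<Rightarrow> (nat \<times> 'a mat) set set" where
  "utypes q _ = {utype q n g | n g. g \<in> unitary_group q n}"

definition utype_size :: "(nat \<times> 'a::field mat) set \<Rightarrow> nat" where
  "utype_size mu = (SOME r. \<exists>(n, g) \<in> mu. r = vec_space.rank n (g - 1\<^sub>m n))"

text \<open>Coefficient of h in X_{mu,n} X_{nu,n} in the group algebra Z[U_n].\<close>
definition prod_coeff ::
  "nat \<Rightarrow> nat \<Rightarrow> (nat \<times> 'a::field mat) set \<Rightarrow> (nat \<times> 'a mat) set \<Rightarrow> 'a mat \<Rightarrow> nat" where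
  "prod_coeff q n mu nu h = card {(a, b). a \<in> unitary_group q n \<and> b \<in> unitary_group q n \<and>
      utype q n a = mu \<and> utype q n b = nu \<and> a * b = h}"

definition qint :: "nat \<Rightarrow> nat \<Rightarrow> rat" where
  "qint q n = ((- of_nat q) ^ n - 1) / (- of_nat q - 1)"

definition qfact :: "nat \<Rightarrow> nat \<Rightarrow> rat" where
  "qfact q k = (\<Prod>i\<in>{1..k}. qint q i)"

definition qbinom_poly :: "nat \<Rightarrow> nat \<Rightarrow> rat poly" where
  "qbinom_poly q k = Polynomial.smult (inverse ((- of_nat q) ^ (k * (k - 1) div 2) * qfact q k))
      (\<Prod>i<k. [:- qint q i, 1:])"

text \<open>Z[q, q^{-1}] as a subset of Q (q a fixed number).\<close>
definition laurent_ints :: "nat \<Rightarrow> rat set" where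
  "laurent_ints q = {of_int m / of_nat q ^ j | m j. True}"

definition R_minus_q :: "nat \<Rightarrow> rat poly set" where
  "R_minus_q q = {(\<Sum>k<K. Polynomial.smult (c k) (qbinom_poly q k)) | K c. \<forall>k<K. c k \<in> laurent_ints q}"

end

theory Submission
  imports Defs "Jordan_Normal_Form.Matrix_Kernel"
begin


context vec_space
begin

lemma lin_indpt_empty: "lin_indpt {}"
  by (metis (no_types) empty_subsetI fin_dim finite_basis_exists subset_li_is_li vec_vs vectorspace.basis_def)

lemma lin_indpt_single: assumes "w \<in> carrier_vec n" "w \<noteq> 0\<^sub>v n" shows "lin_indpt {w}"
proof -
  have "w \<notin> span {}" using assms span_empty by auto
  then show ?thesis using lin_dep_iff_in_span[of "{}" w] lin_indpt_empty assms by auto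
qed

lemma maxli_exists:
  assumes S: "finite S" "S \<subseteq> carrier_vec n" and B: "B \<subseteq> S" "lin_indpt B"
  shows "\<exists>U. B \<subseteq> U \<and> U \<subseteq> S \<and> finite U \<and> S \<subseteq> span U \<and> card U = vectorspace.dim class_ring (span_vs S)"
proof -
  obtain U where U: "finite U" "maximal U (\<lambda>T. T \<subseteq> S \<and> lin_indpt T)" "B \<subseteq> U"
    using maximal_exists_superset[of S "\<lambda>T. T \<subseteq> S \<and> lin_indpt T" B] S B by blast
  have Sc: "S \<subseteq> carrier V" using S by simp
  have dim: "vectorspace.dim class_ring (span_vs S) = card U"
    by (rule dim_span[OF S(2) S(1) U(2)])
  have "lin_indpt U" "U \<subseteq> S" using U(2) unfolding maximal_def by auto
  have "S \<subseteq> span U"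
  proof
    fix s assume "s \<in> S"
    show "s \<in> span U"
    proof (rule ccontr)
      assume ns: "s \<notin> span U"
      have "s \<notin> U" using ns \<open>U \<subseteq> S\<close> Sc in_own_span[of U] by auto
      have Uc: "U \<subseteq> carrier_vec n" using \<open>U \<subseteq> S\<close> Sc by auto
      have sc: "s \<in> carrier_vec n" using \<open>s \<in> S\<close> Sc by auto
      have "lin_indpt (U \<union> {s})"
        using lin_dep_iff_in_span[OF Uc \<open>lin_indpt U\<close> sc \<open>s \<notin> U\<close>] ns by auto
      then have "U \<union> {s} = U" using U(2) \<open>U \<subseteq> S\<close> \<open>s \<in> S\<close> unfolding maximal_def by blast
      then show False using \<open>s \<notin> U\<close> by auto
    qed
  qed
  then show ?thesis using U \<open>U \<subseteq> S\<close> dim by auto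
qed

lemma dim_span_le_card:
  assumes S: "finite S" "S \<subseteq> carrier_vec n"
  shows "vectorspace.dim class_ring (span_vs S) \<le> card S"
proof -
  obtain U where "U \<subseteq> S" "card U = vectorspace.dim class_ring (span_vs S)"
    using maxli_exists[OF S, of "{}"] lin_indpt_empty by auto
  moreover have "card U \<le> card S" by (rule card_mono[OF S(1)]) fact
  ultimately show ?thesis by simp
qed

lemma dim_span_mono:
  assumes S: "finite S" "S \<subseteq> carrier_vec n" and T: "finite T" "T \<subseteq> carrier_vec n"
    and sub: "span S \<subseteq> span T"
  shows "vectorspace.dim class_ring (span_vs S) \<le> vectorspace.dim class_ring (span_vs T)"
proof -
  have sS: "subspace class_ring (span S) V" using S span_is_subspace by auto
  have sT: "subspace class_ring (span T) V" using T span_is_subspace by auto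
  have sub': "subspace class_ring (span S) (vs (span T))"
    using nested_subspaces[OF sT sS sub] .
  have fT: "vectorspace.fin_dim class_ring (vs (span T))" using fin_dim_span T by auto
  have fS: "vectorspace.fin_dim class_ring (vs (span S))" using fin_dim_span S by auto
  have vT: "vectorspace class_ring (vs (span T))" using sT subspace_is_vs by auto
  have "vectorspace.dim class_ring (vectorspace.vs (vs (span T)) (span S)) \<le> vectorspace.dim class_ring (vs (span T))"
    using vectorspace.subspace_dim[OF vT sub' fT] fS by auto
  then show ?thesis by simp
qed

lemma rank_le_card:
  assumes M: "M \<in> carrier_mat n m" and S: "finite S" "S \<subseteq> carrier_vec n"
    and sub: "set (cols M) \<subseteq> span S"
  shows "rank M \<le> card S"
proof -
  have C: "finite (set (cols M))" "set (cols M) \<subseteq> carrier_vec n" by (auto, metis M carrier_matD(1) cols_dim subsetD)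
  have "span (set (cols M)) \<subseteq> span S"
    using span_subsetI[OF S(2) sub] by auto
  then have "rank M \<le> vectorspace.dim class_ring (span_vs S)"
    unfolding rank_def using dim_span_mono[OF C S] by auto
  then show ?thesis using dim_span_le_card[OF S] by auto
qed

lemma col_mult_add_in_span:
  assumes X: "X \<in> carrier_mat n n" and Y: "Y \<in> carrier_mat n n" and Z: "Z \<in> carrier_mat n n"
    and S: "S \<subseteq> carrier_vec n"
    and sX: "set (cols X) \<subseteq> span S" and sY: "set (cols Y) \<subseteq> span S"
  shows "set (cols (X * Z + Y)) \<subseteq> span S"
proof
  fix x assume "x \<in> set (cols (X * Z + Y))"
  then obtain j where j: "j < n" and xj: "x = col (X * Z + Y) j"
    using X Y Z by (auto simp: in_set_conv_nth)
  have xe: "x = X *\<^sub>v col Z j + col Y j"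
    unfolding xj using X Y Z j by (intro eq_vecI, auto simp: col_mult2)
  have spX: "span (set (cols X)) \<subseteq> span S" by (rule span_subsetI[OF S sX])
  have "X *\<^sub>v col Z j \<in> col_space X"
    unfolding col_space_eq[OF X] using X Z j by auto
  then have 1: "X *\<^sub>v col Z j \<in> span S" using spX unfolding col_space_def by auto
  have "col Y j \<in> set (cols Y)" using Y j by (auto simp: in_set_conv_nth intro!: exI[of _ j])
  then have 2: "col Y j \<in> span S" using sY by auto
  show "x \<in> span S" unfolding xe using span_add1[OF S 1 2] by simp
qed

lemma rank_mult_add_le:
  assumes X: "X \<in> carrier_mat n n" and Y: "Y \<in> carrier_mat n n" and Z: "Z \<in> carrier_mat n n"
  shows "rank (X * Z + Y) \<le> rank X + rank Y"
proof -
  have CX: "finite (set (cols X))" "set (cols X) \<subseteq> carrier_vec n"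
    using X cols_dim by (auto, metis X carrier_matD(1) cols_dim subsetD)
  have CY: "finite (set (cols Y))" "set (cols Y) \<subseteq> carrier_vec n"
    using Y cols_dim by (auto, metis Y carrier_matD(1) cols_dim subsetD)
  obtain U1 where U1: "U1 \<subseteq> set (cols X)" "finite U1" "set (cols X) \<subseteq> span U1" "card U1 = rank X"
    using maxli_exists[OF CX, of "{}"] lin_indpt_empty unfolding rank_def by auto
  obtain U2 where U2: "U2 \<subseteq> set (cols Y)" "finite U2" "set (cols Y) \<subseteq> span U2" "card U2 = rank Y"
    using maxli_exists[OF CY, of "{}"] lin_indpt_empty unfolding rank_def by auto
  let ?S = "U1 \<union> U2"
  have S: "finite ?S" "?S \<subseteq> carrier_vec n" using U1 U2 CX CY by auto
  have "set (cols X) \<subseteq> span ?S" using U1(3) span_is_monotone[of U1 ?S] by auto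
  moreover have "set (cols Y) \<subseteq> span ?S" using U2(3) span_is_monotone[of U2 ?S] by auto
  ultimately have "set (cols (X * Z + Y)) \<subseteq> span ?S"
    using col_mult_add_in_span[OF X Y Z S(2)] by auto
  then have "rank (X * Z + Y) \<le> card ?S" using rank_le_card[OF _ S, of "X * Z + Y" n] X Z Y by auto
  also have "\<dots> \<le> card U1 + card U2" by (rule card_Un_le)
  finally show ?thesis using U1 U2 by simp
qed

lemma rank_mult_add_le_strict:
  assumes X: "X \<in> carrier_mat n n" and Y: "Y \<in> carrier_mat n n" and Z: "Z \<in> carrier_mat n n"
    and w0: "w \<in> carrier_vec n" "w \<noteq> 0\<^sub>v n"
    and u1: "u1 \<in> carrier_vec n" "X *\<^sub>v u1 = w"
    and u2: "u2 \<in> carrier_vec n" "Y *\<^sub>v u2 = w"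
  shows "rank (X * Z + Y) + 1 \<le> rank X + rank Y"
proof -
  have w3: "w \<in> span (set (cols X))"
    using col_space_eq[OF X] u1 X unfolding col_space_def by auto
  have w4: "w \<in> span (set (cols Y))"
    using col_space_eq[OF Y] u2 Y unfolding col_space_def by auto
  note w = w0 w3 w4
  have CX: "finite (set (cols X))" "set (cols X) \<subseteq> carrier_vec n"
    using X cols_dim by (auto, metis X carrier_matD(1) cols_dim subsetD)
  have CY: "finite (set (cols Y))" "set (cols Y) \<subseteq> carrier_vec n"
    using Y cols_dim by (auto, metis Y carrier_matD(1) cols_dim subsetD)
  have CY': "finite (insert w (set (cols Y)))" "insert w (set (cols Y)) \<subseteq> carrier_vec n"
    using CY w by auto
  obtain U1 where U1: "U1 \<subseteq> set (cols X)" "finite U1" "set (cols X) \<subseteq> span U1" "card U1 = rank X"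
    using maxli_exists[OF CX, of "{}"] lin_indpt_empty unfolding rank_def by auto
  have spY: "span (insert w (set (cols Y))) = span (set (cols Y))"
  proof
    show "span (insert w (set (cols Y))) \<subseteq> span (set (cols Y))"
      by (rule span_subsetI[OF CY(2)], insert w(4) CY in_own_span[of "set (cols Y)"], auto)
    show "span (set (cols Y)) \<subseteq> span (insert w (set (cols Y)))"
      by (rule span_is_monotone, auto)
  qed
  obtain U2 where U2: "w \<in> U2" "U2 \<subseteq> insert w (set (cols Y))" "finite U2"
      "insert w (set (cols Y)) \<subseteq> span U2" "card U2 = rank Y"
    using maxli_exists[OF CY', of "{w}"] lin_indpt_single[OF w(1,2)] unfolding rank_def spY by auto
  let ?S = "U1 \<union> (U2 - {w})"
  have S: "finite ?S" "?S \<subseteq> carrier_vec n" using U1 U2 CX CY' by auto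
  have sU1: "span U1 \<subseteq> span ?S" by (rule span_is_monotone, auto)
  have "set (cols X) \<subseteq> span ?S" using U1(3) sU1 by auto
  have wS: "w \<in> span ?S"
  proof -
    have "span (set (cols X)) \<subseteq> span U1"
      by (rule span_subsetI, insert U1 CX, auto)
    then show ?thesis using w(3) sU1 by auto
  qed
  have "U2 \<subseteq> span ?S"
  proof
    fix u assume "u \<in> U2"
    show "u \<in> span ?S"
    proof (cases "u = w")
      case True then show ?thesis using wS by simp
    next
      case False then have "u \<in> ?S" using \<open>u \<in> U2\<close> by auto
      then show ?thesis using in_own_span[OF S(2)] by auto
    qed
  qed
  then have "span U2 \<subseteq> span ?S" using span_subsetI[OF S(2)] by auto
  then have "set (cols Y) \<subseteq> span ?S" using U2(4) by auto
  then have "set (cols (X * Z + Y)) \<subseteq> span ?S"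
    using col_mult_add_in_span[OF X Y Z S(2)] \<open>set (cols X) \<subseteq> span ?S\<close> by auto
  then have "rank (X * Z + Y) \<le> card ?S" using rank_le_card[OF _ S, of "X * Z + Y" n] X Z Y by auto
  also have "\<dots> \<le> card U1 + card (U2 - {w})" by (rule card_Un_le)
  also have "card (U2 - {w}) = card U2 - 1" using U2 by simp
  finally show ?thesis using U1 U2 \<open>w \<in> U2\<close> \<open>finite U2\<close> card_gt_0_iff[of U2] by auto
qed

end

lemma rank_nullity_mat:
  fixes A :: "'a::field mat"
  assumes A: "A \<in> carrier_mat nr nc"
  shows "vec_space.rank nr A + kernel_dim A = nc"
proof -
  let ?T = "\<lambda>v. A *\<^sub>v v"
  interpret NC: vec_space "TYPE('a)" nc .
  interpret NR: vec_space "TYPE('a)" nr .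
  interpret K: kernel nr nc A by (unfold_locales, rule A)
  have hom: "?T \<in> LinearCombinations.module_hom class_ring (module_vec TYPE('a) nc) (module_vec TYPE('a) nr)"
      unfolding LinearCombinations.module_hom_def using A
      by (auto simp: module_vec_simps mult_add_distrib_mat_vec mult_mat_vec)
  interpret L: linear_map class_ring "module_vec TYPE('a) nc" "module_vec TYPE('a) nr" ?T
    unfolding linear_map_def mod_hom_def mod_hom_axioms_def
    using vec_vs vectorspace.axioms(1) hom by blast
  have im: "L.imT = NR.span (set (cols A))"
    using NR.col_space_eq[OF A] A unfolding L.im_def NR.col_space_def by (auto simp: module_vec_simps)
  have ker: "L.kerT = mat_kernel A"
    using A unfolding L.ker_def mat_kernel_def by (auto simp: module_vec_simps)
  have "vectorspace.dim class_ring (NR.vs L.imT) + vectorspace.dim class_ring (NC.vs L.kerT) = NC.dim"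
    by (rule L.rank_nullity) simp
  then show ?thesis unfolding im ker NC.dim_is_n NR.rank_def using A by simp
qed
lemma rank_kernel:
  fixes A :: "'a::field mat"
  assumes A: "A \<in> carrier_mat n n"
  shows "vec_space.rank n A = n - kernel_dim A"
  using rank_nullity_mat[OF A] by simp

lemma rank_conj:
  fixes X :: "'a::field mat"
  assumes X: "X \<in> carrier_mat n n" and h: "h \<in> carrier_mat n n" and hi: "hi \<in> carrier_mat n n"
    and inv: "h * hi = 1\<^sub>m n"
  shows "vec_space.rank n (h * X * hi) = vec_space.rank n X"
proof -
  have inv2: "hi * h = 1\<^sub>m n" using mat_mult_left_right_inverse[OF h hi inv] .
  have C: "h * X * hi \<in> carrier_mat n n" using X h hi by auto
  have wit: "similar_mat_wit (h * X * hi) X h hi"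
    unfolding similar_mat_wit_def Let_def using C X h hi inv inv2 by auto
  have "kernel.dim n (h * X * hi) = kernel.dim n X"
    by (rule similar_mat_wit_kernel_dim[OF C wit])
  then have "kernel_dim (h * X * hi) = kernel_dim X"
    unfolding kernel_dim_def using C X hi by simp
  then show ?thesis using rank_kernel[OF C] rank_kernel[OF X] by simp
qed

lemma kernel_dim_zero:
  "kernel_dim (0\<^sub>m m m :: 'a::field mat) = m"
proof -
  interpret V: vec_space "TYPE('a)" m .
  have "mat_kernel (0\<^sub>m m m :: 'a mat) = carrier_vec m" by (auto simp: mat_kernel_def)
  then have "kernel_dim (0\<^sub>m m m :: 'a mat) = vectorspace.dim class_ring (V.vs (carrier_vec m))"
    unfolding kernel_dim_def by simp
  also have eq: "V.vs (carrier_vec m) = V.V" unfolding module_vec_def by simp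
  finally have "kernel_dim (0\<^sub>m m m :: 'a mat) = V.dim" .
  then show ?thesis using V.dim_is_n by simp
qed

lemma rank_block0:
  fixes X :: "'a::field mat"
  assumes X: "X \<in> carrier_mat n n"
  shows "vec_space.rank (n + m) (four_block_mat X (0\<^sub>m n m) (0\<^sub>m m n) (0\<^sub>m m m)) = vec_space.rank n X"
proof -
  let ?A = "four_block_mat X (0\<^sub>m n m) (0\<^sub>m m n) (0\<^sub>m m m)"
  have A: "?A \<in> carrier_mat (n + m) (n + m)" using X by auto
  have "kernel.dim (n + m) ?A = kernel.dim n X + kernel.dim m (0\<^sub>m m m :: 'a mat)"
    by (rule kernel_four_block_0_mat[OF refl X], auto)
  then have "kernel_dim ?A = kernel_dim X + kernel_dim (0\<^sub>m m m :: 'a mat)"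
    unfolding kernel_dim_def using X A by simp
  then have "kernel_dim ?A = kernel_dim X + m" using kernel_dim_zero by simp
  then show ?thesis using rank_kernel[OF A] rank_kernel[OF X] rank_nullity_mat[OF X] by simp
qed



lemma unitary_groupI:
  fixes a :: "'a::field mat"
  assumes a: "a \<in> carrier_mat n n" and u: "transpose_mat a * frob q a = 1\<^sub>m n"
  shows "a \<in> unitary_group q n"
proof -
  have fa: "frob q a \<in> carrier_mat n n" using a unfolding frob_def by auto
  have at: "transpose_mat a \<in> carrier_mat n n" using a by auto
  have u2: "frob q a * transpose_mat a = 1\<^sub>m n" using mat_mult_left_right_inverse[OF at fa u] .
  have "a * transpose_mat (frob q a) = transpose_mat (frob q a * transpose_mat a)"
    using transpose_mult[OF fa at] by simp
  then have i1: "a * transpose_mat (frob q a) = 1\<^sub>m n" using u2 by simp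
  have "transpose_mat (frob q a) * a = transpose_mat (transpose_mat a * frob q a)"
    using transpose_mult[OF at fa] by simp
  then have i2: "transpose_mat (frob q a) * a = 1\<^sub>m n" using u by simp
  have "invertible_mat a" unfolding invertible_mat_def inverts_mat_def square_mat.simps
    using a i1 i2 fa by (intro conjI exI[of _ "transpose_mat (frob q a)"], auto)
  then show ?thesis unfolding unitary_group_def using a u by auto
qed

lemma unitary_groupD:
  assumes "a \<in> unitary_group q n"
  shows "a \<in> carrier_mat n n" "transpose_mat a * frob q a = 1\<^sub>m n"
  using assms unfolding unitary_group_def by auto

lemma frob_carrier[simp]: "frob q a \<in> carrier_mat (dim_row a) (dim_col a)"
  unfolding frob_def by auto

lemma one_unitary: assumes q: "q > 0" shows "(1\<^sub>m n :: 'a::field mat) \<in> unitary_group q n"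
proof (rule unitary_groupI)
  have "frob q (1\<^sub>m n :: 'a mat) = 1\<^sub>m n" unfolding frob_def using q by (intro eq_matI, auto)
  then show "transpose_mat (1\<^sub>m n) * frob q (1\<^sub>m n :: 'a mat) = 1\<^sub>m n" by simp
qed auto

lemma emb_carrier[simp]:
  assumes "g \<in> carrier_mat n n" "n \<le> N"
  shows "embed_mat n N g \<in> carrier_mat N N"
  using assms unfolding embed_mat_def by (auto intro!: carrier_matI)

lemma emb_mult:
  fixes a b :: "'a::field mat"
  assumes a: "a \<in> carrier_mat n n" and b: "b \<in> carrier_mat n n"
  shows "embed_mat n N a * embed_mat n N b = embed_mat n N (a * b)"
  unfolding embed_mat_def
  by (subst mult_four_block_mat[of _ n n _ "N - n" _ "N - n"], insert a b, auto)

lemma emb_one: "embed_mat n N (1\<^sub>m n :: 'a::field mat) = 1\<^sub>m (n + (N - n))"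
  unfolding embed_mat_def by simp

lemma emb_one': "n \<le> N \<Longrightarrow> embed_mat n N (1\<^sub>m n :: 'a::field mat) = 1\<^sub>m N"
  using emb_one[of n N] by simp

lemma emb_id: assumes "g \<in> carrier_mat n n" shows "embed_mat n n g = g"
  unfolding embed_mat_def using assms by (intro eq_matI, auto)

lemma emb_emb:
  fixes g :: "'a::field mat"
  assumes g: "g \<in> carrier_mat n n" and nm: "n \<le> m" and mN: "m \<le> N"
  shows "embed_mat m N (embed_mat n m g) = embed_mat n N g"
  unfolding embed_mat_def using g nm mN by (intro eq_matI, auto)

lemma emb_minus_one:
  fixes g :: "'a::field mat"
  assumes g: "g \<in> carrier_mat n n" and nN: "n \<le> N"
  shows "embed_mat n N g - 1\<^sub>m N = four_block_mat (g - 1\<^sub>m n) (0\<^sub>m n (N - n)) (0\<^sub>m (N - n) n) (0\<^sub>m (N - n) (N - n))"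
  unfolding embed_mat_def using g nN by (intro eq_matI, auto)

lemma emb_inj:
  assumes a: "a \<in> carrier_mat n n" and b: "b \<in> carrier_mat n n"
    and e: "embed_mat n N a = embed_mat n N b"
  shows "a = b"
proof (rule eq_matI)
  fix i j assume ij: "i < dim_row b" "j < dim_col b"
  have "embed_mat n N a $$ (i, j) = embed_mat n N b $$ (i, j)" using e by simp
  then show "a $$ (i, j) = b $$ (i, j)" unfolding embed_mat_def using a b ij by auto
qed (insert a b, auto)

lemma emb_unitary_prod:
  fixes a :: "'a::field mat"
  assumes a: "a \<in> carrier_mat n n" and q: "q > 0"
  shows "transpose_mat (embed_mat n N a) * frob q (embed_mat n N a)
       = embed_mat n N (transpose_mat a * frob q a)"
proof -
  have f: "frob q (embed_mat n N a) = embed_mat n N (frob q a)"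
    unfolding frob_def embed_mat_def using a q by (intro eq_matI, auto)
  have t: "transpose_mat (embed_mat n N a) = embed_mat n N (transpose_mat a)"
    unfolding embed_mat_def using a by (intro eq_matI, auto)
  show ?thesis unfolding f t by (rule emb_mult, insert a, auto simp: frob_def)
qed

lemma emb_unitary:
  fixes a :: "'a::field mat"
  assumes a: "a \<in> unitary_group q n" and q: "q > 0" and nN: "n \<le> N"
  shows "embed_mat n N a \<in> unitary_group q N"
proof (rule unitary_groupI)
  note a' = unitary_groupD[OF a]
  show "embed_mat n N a \<in> carrier_mat N N" using a' nN by simp
  show "transpose_mat (embed_mat n N a) * frob q (embed_mat n N a) = 1\<^sub>m N"
    unfolding emb_unitary_prod[OF a'(1) q] a'(2) using emb_one'[OF nN] .
qed

lemma conj_lift: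
  fixes x y :: "'a::field mat"
  assumes c: "conj_in (unitary_group q N) x y" and x: "x \<in> carrier_mat N N" and q: "q > 0"
    and NM: "N \<le> M"
  shows "conj_in (unitary_group q M) (embed_mat N M x) (embed_mat N M y)"
proof -
  obtain h hi where h: "h \<in> unitary_group q N" and hi: "hi \<in> unitary_group q N"
    and i: "h * hi = 1\<^sub>m (dim_row h)" and e: "h * x * hi = y"
    using c unfolding conj_in_def by auto
  note hc = unitary_groupD(1)[OF h] and hic = unitary_groupD(1)[OF hi]
  have i': "h * hi = 1\<^sub>m N" using i hc by simp
  have "embed_mat N M h * embed_mat N M hi = 1\<^sub>m M"
    using emb_mult[OF hc hic] i' emb_one'[OF NM] by simp
  moreover have "embed_mat N M h * embed_mat N M x * embed_mat N M hi = embed_mat N M y"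
    using emb_mult[OF hc x] emb_mult[OF _ hic, of "h * x"] hc x e by simp
  moreover have "dim_row (embed_mat N M h) = M" using emb_carrier[OF hc NM] by auto
  ultimately show ?thesis unfolding conj_in_def
    using emb_unitary[OF h q NM] emb_unitary[OF hi q NM]
    by metis
qed

lemma conj_refl:
  fixes x :: "'a::field mat"
  assumes x: "x \<in> carrier_mat N N" and q: "q > 0"
  shows "conj_in (unitary_group q N) x x"
  unfolding conj_in_def using one_unitary[OF q, of N] x
  by (intro bexI[of _ "1\<^sub>m N"], auto)



lemma same_utype_simp:
  "same_utype q (n, g) (n', g') \<longleftrightarrow> g \<in> unitary_group q n \<and> g' \<in> unitary_group q n' \<and>
      (\<exists>N \<ge> max n n'. conj_in (unitary_group q N) (embed_mat n N g) (embed_mat n' N g'))"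
  unfolding same_utype_def by simp

lemma utype_refl:
  assumes g: "g \<in> unitary_group q n" and q: "q > 0"
  shows "(n, g) \<in> utype q n g"
  unfolding utype_def same_utype_simp mem_Collect_eq using g conj_refl[OF _ q, of g n]
    unitary_groupD(1)[OF g] emb_id[of g n]
  by (intro conjI exI[of _ n], auto)

lemma utype_emb:
  fixes g :: "'a::field mat"
  assumes g: "g \<in> unitary_group q n" and q: "q > 0" and nN: "n \<le> N"
  shows "utype q N (embed_mat n N g) = utype q n g"
proof -
  note gc = unitary_groupD(1)[OF g]
  have eg: "embed_mat n N g \<in> unitary_group q N" by (rule emb_unitary[OF g q nN])
  have "same_utype q (N, embed_mat n N g) (n', g') \<longleftrightarrow> same_utype q (n, g) (n', g')" for n' g'
  proof
    assume "same_utype q (N, embed_mat n N g) (n', g')"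
    then obtain M where g': "g' \<in> unitary_group q n'" and M: "M \<ge> max N n'"
      and c: "conj_in (unitary_group q M) (embed_mat N M (embed_mat n N g)) (embed_mat n' M g')"
      unfolding same_utype_simp by auto
    have "embed_mat N M (embed_mat n N g) = embed_mat n M g" using emb_emb[OF gc nN] M by simp
    then show "same_utype q (n, g) (n', g')" unfolding same_utype_simp using g g' M c nN
      by (intro conjI exI[of _ M], auto)
  next
    assume "same_utype q (n, g) (n', g')"
    then obtain M where g': "g' \<in> unitary_group q n'" and M: "M \<ge> max n n'"
      and c: "conj_in (unitary_group q M) (embed_mat n M g) (embed_mat n' M g')"
      unfolding same_utype_simp by auto
    note g'c = unitary_groupD(1)[OF g']
    define M' where "M' = max M N"
    have MM': "M \<le> M'" unfolding M'_def by simp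
    have c': "conj_in (unitary_group q M') (embed_mat M M' (embed_mat n M g)) (embed_mat M M' (embed_mat n' M g'))"
      by (rule conj_lift[OF c _ q MM'], insert gc M, auto)
    have e1: "embed_mat M M' (embed_mat n M g) = embed_mat n M' g" using emb_emb[OF gc _ MM', of] M by simp
    have e2: "embed_mat M M' (embed_mat n' M g') = embed_mat n' M' g'" using emb_emb[OF g'c _ MM'] M by simp
    have e3: "embed_mat N M' (embed_mat n N g) = embed_mat n M' g" using emb_emb[OF gc nN] unfolding M'_def by simp
    show "same_utype q (N, embed_mat n N g) (n', g')" unfolding same_utype_simp using eg g' c' M
      unfolding e1 e2 e3[symmetric] by (intro conjI exI[of _ M'], auto simp: M'_def)
  qed
  then show ?thesis unfolding utype_def by auto
qed

lemma rank_emb_minus_one: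
  fixes g :: "'a::field mat"
  assumes g: "g \<in> carrier_mat n n" and nN: "n \<le> N"
  shows "vec_space.rank N (embed_mat n N g - 1\<^sub>m N) = vec_space.rank n (g - 1\<^sub>m n)"
proof -
  have "vec_space.rank (n + (N - n)) (embed_mat n N g - 1\<^sub>m N) = vec_space.rank n (g - 1\<^sub>m n)"
    unfolding emb_minus_one[OF g nN] by (rule rank_block0, insert g, auto)
  then show ?thesis using nN by simp
qed

lemma utype_rank:
  fixes g :: "'a::field mat"
  assumes g: "g \<in> unitary_group q n" and y: "(n', g') \<in> utype q n g"
  shows "vec_space.rank n' (g' - 1\<^sub>m n') = vec_space.rank n (g - 1\<^sub>m n)"
proof -
  obtain M where g': "g' \<in> unitary_group q n'" and M: "M \<ge> max n n'"
      and c: "conj_in (unitary_group q M) (embed_mat n M g) (embed_mat n' M g')"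
    using y unfolding utype_def mem_Collect_eq same_utype_simp by auto
  obtain h hi where h: "h \<in> unitary_group q M" and hi: "hi \<in> unitary_group q M"
    and i: "h * hi = 1\<^sub>m (dim_row h)" and e: "h * embed_mat n M g * hi = embed_mat n' M g'"
    using c unfolding conj_in_def by auto
  note hc = unitary_groupD(1)[OF h] and hic = unitary_groupD(1)[OF hi]
  note gc = unitary_groupD(1)[OF g] and g'c = unitary_groupD(1)[OF g']
  have i': "h * hi = 1\<^sub>m M" using i hc by simp
  define X where "X = embed_mat n M g"
  have X: "X \<in> carrier_mat M M" unfolding X_def using gc M by simp
  have "h * (X - 1\<^sub>m M) * hi = h * X * hi - h * hi"
  proof -
    have "h * (X - 1\<^sub>m M) = h * X - h" using X hc by (simp add: mult_minus_distrib_mat)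
    moreover have "(h * X - h) * hi = h * X * hi - h * hi"
      using X hc hic by (subst minus_mult_distrib_mat[of _ M M], auto)
    ultimately show ?thesis by simp
  qed
  then have eq: "h * (X - 1\<^sub>m M) * hi = embed_mat n' M g' - 1\<^sub>m M" using e i' unfolding X_def by simp
  have "vec_space.rank M (embed_mat n' M g' - 1\<^sub>m M) = vec_space.rank M (X - 1\<^sub>m M)"
    unfolding eq[symmetric] by (rule rank_conj[OF _ hc hic i'], insert X, auto)
  moreover have "vec_space.rank M (X - 1\<^sub>m M) = vec_space.rank n (g - 1\<^sub>m n)"
    unfolding X_def by (rule rank_emb_minus_one[OF gc], insert M, auto)
  moreover have "vec_space.rank M (embed_mat n' M g' - 1\<^sub>m M) = vec_space.rank n' (g' - 1\<^sub>m n')"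
    by (rule rank_emb_minus_one[OF g'c], insert M, auto)
  ultimately show ?thesis by simp
qed

lemma utype_size_eq:
  fixes g :: "'a::field mat"
  assumes g: "g \<in> unitary_group q n" and q: "q > 0"
  shows "utype_size (utype q n g) = vec_space.rank n (g - 1\<^sub>m n)"
  unfolding utype_size_def
proof (rule some_equality)
  show "\<exists>(n', g')\<in>utype q n g. vec_space.rank n (g - 1\<^sub>m n) = vec_space.rank n' (g' - 1\<^sub>m n')"
    using utype_refl[OF g q] by auto
  fix r assume "\<exists>(n', g')\<in>utype q n g. r = vec_space.rank n' (g' - 1\<^sub>m n')"
  then show "r = vec_space.rank n (g - 1\<^sub>m n)" using utype_rank[OF g] by auto
qed



lemma fixed_last_decomp:
  fixes A :: "'a::field mat"
  assumes A: "A \<in> unitary_group q (Suc n)" and q: "q > 0"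
    and fx: "A *\<^sub>v unit_vec (Suc n) n = unit_vec (Suc n) n"
  shows "\<exists>a. a \<in> unitary_group q n \<and> A = embed_mat n (Suc n) a"
proof -
  note Ac = unitary_groupD(1)[OF A] and Au = unitary_groupD(2)[OF A]
  have colA: "A $$ (i, n) = (if i = n then 1 else 0)" if i: "i < Suc n" for i
  proof -
    have "(A *\<^sub>v unit_vec (Suc n) n) $ i = unit_vec (Suc n) n $ i" using fx by simp
    then show ?thesis using i Ac by simp
  qed
  have colA': "col A n = unit_vec (Suc n) n"
    using colA Ac by (intro eq_vecI, auto)
  have rowA: "A $$ (n, j) = 0" if j: "j < n" for j
  proof -
    have "(transpose_mat A * frob q A) $$ (n, j) = (1\<^sub>m (Suc n) :: 'a mat) $$ (n, j)" using Au by simp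
    also have "\<dots> = 0" using j by simp
    also have "(transpose_mat A * frob q A) $$ (n, j) = col A n \<bullet> col (frob q A) j"
      using Ac j by (simp add: frob_def)
    also have "\<dots> = col (frob q A) j $ n" unfolding colA'
      by (rule scalar_prod_left_unit, insert Ac j, auto simp: frob_def intro!: col_carrier_vec[of j "Suc n"])
    also have "\<dots> = A $$ (n, j) ^ q" using Ac j by (simp add: frob_def)
    finally show ?thesis by simp
  qed
  define a where "a = mat n n (\<lambda>(i, j). A $$ (i, j))"
  have ac: "a \<in> carrier_mat n n" unfolding a_def by auto
  have Ae: "A = embed_mat n (Suc n) a"
    unfolding embed_mat_def a_def
    by (rule eq_matI, insert Ac colA rowA, auto simp: less_Suc_eq)
  have "embed_mat n (Suc n) (transpose_mat a * frob q a) = embed_mat n (Suc n) (1\<^sub>m n)"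
  proof -
    have "embed_mat n (Suc n) (transpose_mat a * frob q a) = transpose_mat A * frob q A"
      using emb_unitary_prod[OF ac q, of "Suc n"] Ae by simp
    also have "\<dots> = 1\<^sub>m (Suc n)" by (rule Au)
    also have "\<dots> = embed_mat n (Suc n) (1\<^sub>m n)" by (rule emb_one'[symmetric], simp)
    finally show ?thesis .
  qed
  then have "transpose_mat a * frob q a = 1\<^sub>m n"
    by (rule emb_inj[rotated 2], insert ac, auto simp: frob_def)
  then have "a \<in> unitary_group q n" using unitary_groupI[OF ac] by auto
  then show ?thesis using Ae by auto
qed

definition pairs where
  "pairs q n mu nu h = {(a, b). a \<in> unitary_group q n \<and> b \<in> unitary_group q n \<and>
      utype q n a = mu \<and> utype q n b = nu \<and> a * b = h}"

lemma prod_coeff_pairs: "prod_coeff q n mu nu h = card (pairs q n mu nu h)"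
  unfolding prod_coeff_def pairs_def by simp

lemma split_prod_minus_one:
  fixes a b :: "'a::field mat"
  assumes a: "a \<in> carrier_mat n n" and b: "b \<in> carrier_mat n n"
  shows "a * b - 1\<^sub>m n = (a - 1\<^sub>m n) * b + (b - 1\<^sub>m n)"
proof -
  have "(a - 1\<^sub>m n) * b = a * b - b" using a b by (subst minus_mult_distrib_mat[of _ n n], auto)
  then show ?thesis using a b by (intro eq_matI, auto)
qed

lemma pairs_rank_le:
  fixes h :: "'a::field mat"
  assumes p: "(a, b) \<in> pairs q n mu nu h" and q: "q > 0"
  shows "vec_space.rank n (h - 1\<^sub>m n) \<le> utype_size mu + utype_size nu"
proof -
  have a: "a \<in> unitary_group q n" and b: "b \<in> unitary_group q n" and mu: "utype q n a = mu"
    and nu: "utype q n b = nu" and h: "a * b = h" using p unfolding pairs_def by auto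
  note ac = unitary_groupD(1)[OF a] and bc = unitary_groupD(1)[OF b]
  have "vec_space.rank n ((a - 1\<^sub>m n) * b + (b - 1\<^sub>m n)) \<le> vec_space.rank n (a - 1\<^sub>m n) + vec_space.rank n (b - 1\<^sub>m n)"
    by (rule vec_space.rank_mult_add_le, insert ac bc, auto)
  then show ?thesis
    using split_prod_minus_one[OF ac bc] h utype_size_eq[OF a q] utype_size_eq[OF b q] mu nu by simp
qed

lemma emb_fix_last:
  fixes h :: "'a::field mat"
  assumes h: "h \<in> carrier_mat n n"
  shows "embed_mat n (Suc n) h *\<^sub>v unit_vec (Suc n) n = unit_vec (Suc n) n"
proof -
  have H: "embed_mat n (Suc n) h \<in> carrier_mat (Suc n) (Suc n)" using h by simp
  show ?thesis
  proof (rule eq_vecI)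
    fix i assume "i < dim_vec (unit_vec (Suc n) n)"
    then have i: "i < Suc n" by simp
    have "(embed_mat n (Suc n) h *\<^sub>v unit_vec (Suc n) n) $ i = embed_mat n (Suc n) h $$ (i, n)"
      using H i by simp
    also have "\<dots> = unit_vec (Suc n) n $ i"
      unfolding embed_mat_def using h i by (auto simp: less_Suc_eq)
    finally show "(embed_mat n (Suc n) h *\<^sub>v unit_vec (Suc n) n) $ i = unit_vec (Suc n) n $ i" .
  qed (insert H, auto)
qed

lemma pairs_step:
  fixes h :: "'a::field mat"
  assumes h: "h \<in> unitary_group q n" and q: "q > 0"
    and rk: "vec_space.rank n (h - 1\<^sub>m n) = utype_size mu + utype_size nu"
  shows "card (pairs q (Suc n) mu nu (embed_mat n (Suc n) h)) = card (pairs q n mu nu h)"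
proof -
  note hc = unitary_groupD(1)[OF h]
  let ?f = "\<lambda>(a, b). (embed_mat n (Suc n) a, embed_mat n (Suc n) (b :: 'a mat))"
  let ?H = "embed_mat n (Suc n) h"
  let ?e = "unit_vec (Suc n) n :: 'a vec"
  have Hc: "?H \<in> carrier_mat (Suc n) (Suc n)" using hc by simp
  have inj: "inj_on ?f (pairs q n mu nu h)"
  proof (rule inj_onI, clarify)
    fix a b a' b' assume p: "(a, b) \<in> pairs q n mu nu h" "(a', b') \<in> pairs q n mu nu h"
      and e1: "embed_mat n (Suc n) a = embed_mat n (Suc n) a'" and e2: "embed_mat n (Suc n) b = embed_mat n (Suc n) b'"
    from p have c: "a \<in> carrier_mat n n" "b \<in> carrier_mat n n" "a' \<in> carrier_mat n n" "b' \<in> carrier_mat n n"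
      unfolding pairs_def by (auto dest: unitary_groupD)
    show "a = a' \<and> b = b'" using emb_inj[OF c(1,3) e1] emb_inj[OF c(2,4) e2] by simp
  qed
  have sub: "?f ` pairs q n mu nu h \<subseteq> pairs q (Suc n) mu nu ?H"
  proof clarify
    fix a b assume p: "(a, b) \<in> pairs q n mu nu h"
    then have a: "a \<in> unitary_group q n" and b: "b \<in> unitary_group q n" and mu: "utype q n a = mu"
      and nu: "utype q n b = nu" and ab: "a * b = h" unfolding pairs_def by auto
    show "(embed_mat n (Suc n) a, embed_mat n (Suc n) b) \<in> pairs q (Suc n) mu nu ?H"
      unfolding pairs_def using emb_unitary[OF a q] emb_unitary[OF b q] utype_emb[OF a q] utype_emb[OF b q]
        mu nu ab emb_mult[OF unitary_groupD(1)[OF a] unitary_groupD(1)[OF b]] by auto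
  qed
  have sup: "pairs q (Suc n) mu nu ?H \<subseteq> ?f ` pairs q n mu nu h"
  proof clarify
    fix A B assume p: "(A, B) \<in> pairs q (Suc n) mu nu ?H"
    then have A: "A \<in> unitary_group q (Suc n)" and B: "B \<in> unitary_group q (Suc n)" and mu: "utype q (Suc n) A = mu"
      and nu: "utype q (Suc n) B = nu" and AB: "A * B = ?H" unfolding pairs_def by auto
    note Ac = unitary_groupD(1)[OF A] and Bc = unitary_groupD(1)[OF B]
    have ec: "?e \<in> carrier_vec (Suc n)" by simp
    have He: "?H *\<^sub>v ?e = ?e" by (rule emb_fix_last[OF hc])
    have rkH: "vec_space.rank (Suc n) (?H - 1\<^sub>m (Suc n)) = vec_space.rank (Suc n) (A - 1\<^sub>m (Suc n)) + vec_space.rank (Suc n) (B - 1\<^sub>m (Suc n))"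
      using rank_emb_minus_one[OF hc, of "Suc n"] rk utype_size_eq[OF A q] utype_size_eq[OF B q] mu nu by simp
    define u where "u = B *\<^sub>v ?e"
    have uc: "u \<in> carrier_vec (Suc n)" unfolding u_def using Bc by simp
    have Be: "u = ?e"
    proof (rule ccontr)
      assume ne: "u \<noteq> ?e"
      define w where "w = u - ?e"
      have wc: "w \<in> carrier_vec (Suc n)" unfolding w_def using uc by simp
      have w0: "w \<noteq> 0\<^sub>v (Suc n)"
      proof
        assume z: "w = 0\<^sub>v (Suc n)"
        have "u = ?e"
        proof (rule eq_vecI)
          fix i assume "i < dim_vec ?e" then have i: "i < Suc n" by simp
          have "w $ i = 0" using z i by simp
          then show "u $ i = ?e $ i" unfolding w_def using uc i by simp
        qed (insert uc, simp)
        then show False using ne by simp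
      qed
      have wB: "(B - 1\<^sub>m (Suc n)) *\<^sub>v ?e = w"
        unfolding w_def u_def using Bc by (simp add: minus_mult_distrib_mat_vec[OF Bc _ ec])
      have "A *\<^sub>v u = ?e" unfolding u_def using Ac Bc AB He by (simp add: assoc_mult_mat_vec[symmetric])
      then have Au: "(A - 1\<^sub>m (Suc n)) *\<^sub>v u = ?e - u"
        using Ac uc by (simp add: minus_mult_distrib_mat_vec[OF Ac _ uc])
      have Am: "A - 1\<^sub>m (Suc n) \<in> carrier_mat (Suc n) (Suc n)" by (rule minus_carrier_mat, simp)
      have "(A - 1\<^sub>m (Suc n)) *\<^sub>v ((-1) \<cdot>\<^sub>v u) = (-1) \<cdot>\<^sub>v ((A - 1\<^sub>m (Suc n)) *\<^sub>v u)"
        by (rule mult_mat_vec[OF Am uc])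
      also have "\<dots> = (-1) \<cdot>\<^sub>v (?e - u)" unfolding Au ..
      also have "\<dots> = w" unfolding w_def using uc by (intro eq_vecI, auto)
      finally have wA: "(A - 1\<^sub>m (Suc n)) *\<^sub>v ((-1) \<cdot>\<^sub>v u) = w" .
      have "vec_space.rank (Suc n) ((A - 1\<^sub>m (Suc n)) * B + (B - 1\<^sub>m (Suc n))) + 1
          \<le> vec_space.rank (Suc n) (A - 1\<^sub>m (Suc n)) + vec_space.rank (Suc n) (B - 1\<^sub>m (Suc n))"
        by (rule vec_space.rank_mult_add_le_strict[OF _ _ _ wc w0 _ wA _ wB], insert Ac Bc uc, auto)
      then show False using rkH split_prod_minus_one[OF Ac Bc] AB by simp
    qed
    have "A *\<^sub>v ?e = A *\<^sub>v (B *\<^sub>v ?e)" using Be unfolding u_def by simp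
    also have "\<dots> = (A * B) *\<^sub>v ?e" by (rule assoc_mult_mat_vec[symmetric, OF Ac Bc ec])
    also have "\<dots> = ?e" using AB He by simp
    finally have Ae: "A *\<^sub>v ?e = ?e" .
    obtain a where a: "a \<in> unitary_group q n" and Aa: "A = embed_mat n (Suc n) a"
      using fixed_last_decomp[OF A q Ae] by auto
    obtain b where b: "b \<in> unitary_group q n" and Bb: "B = embed_mat n (Suc n) b"
      using fixed_last_decomp[OF B q] Be unfolding u_def by auto
    note ac = unitary_groupD(1)[OF a] and bc = unitary_groupD(1)[OF b]
    have "embed_mat n (Suc n) (a * b) = embed_mat n (Suc n) h"
      using AB emb_mult[OF ac bc] Aa Bb by simp
    then have ab: "a * b = h" by (rule emb_inj[rotated 2], insert ac bc hc, auto)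
    have "(a, b) \<in> pairs q n mu nu h" unfolding pairs_def
      using a b ab mu nu utype_emb[OF a q, of "Suc n"] utype_emb[OF b q, of "Suc n"] Aa Bb by auto
    then show "(A, B) \<in> ?f ` pairs q n mu nu h" using Aa Bb by force
  qed
  have "bij_betw ?f (pairs q n mu nu h) (pairs q (Suc n) mu nu ?H)"
    unfolding bij_betw_def using inj sub sup by auto
  then show ?thesis by (simp add: bij_betw_same_card)
qed



lemma qint_inj:
  assumes q: "q \<ge> 2" and e: "qint q a = qint q b"
  shows "a = b"
proof -
  have d: "(- of_nat q - 1 :: rat) \<noteq> 0" using q by simp
  have "(- of_nat q :: rat) ^ a = (- of_nat q) ^ b" using e d unfolding qint_def
    by (simp add: divide_cancel_right)
  then have "\<bar>(- of_nat q :: rat) ^ a\<bar> = \<bar>(- of_nat q) ^ b\<bar>" by simp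
  then have "(of_nat q :: rat) ^ a = of_nat q ^ b" by (simp add: power_abs)
  then have "q ^ a = q ^ b" by (metis of_nat_eq_iff of_nat_power)
  then show ?thesis using q by (simp add: power_inject_exp)
qed

lemma poly_zero_from_qint:
  fixes p :: "rat poly"
  assumes q: "q \<ge> 2" and z: "\<And>n. n \<ge> m \<Longrightarrow> poly p (qint q n) = 0"
  shows "p = 0"
proof (rule ccontr)
  assume p: "p \<noteq> 0"
  have fin: "finite {x. poly p x = 0}" by (rule poly_roots_finite[OF p])
  have "range (\<lambda>k. qint q (m + k)) \<subseteq> {x. poly p x = 0}" using z by auto
  then have "finite (range (\<lambda>k. qint q (m + k)))" using fin finite_subset by blast
  moreover have "inj (\<lambda>k. qint q (m + k))" by (rule injI, drule qint_inj[OF q], simp)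
  ultimately have "finite (UNIV :: nat set)" using finite_imageD by blast
  then show False by simp
qed

theorem theorem8p7:
  fixes q :: nat
    and TYPE_F :: "'a::{field, finite} itself"
    and r :: "(nat \<times> 'a mat) set \<Rightarrow> (nat \<times> 'a mat) set \<Rightarrow> (nat \<times> 'a mat) set \<Rightarrow> rat poly"
  assumes q: "prime_power q"
    and card: "card (UNIV :: 'a set) = q ^ 2"
    and r_in_R: "\<And>mu nu la. mu \<in> utypes q TYPE('a) \<Longrightarrow> nu \<in> utypes q TYPE('a) \<Longrightarrow>
                   la \<in> utypes q TYPE('a) \<Longrightarrow> r mu nu la \<in> R_minus_q q"
    and r_struct: "\<And>mu nu n h. mu \<in> utypes q TYPE('a) \<Longrightarrow> nu \<in> utypes q TYPE('a) \<Longrightarrow>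
                   h \<in> (unitary_group q n :: 'a mat set) \<Longrightarrow>
                   of_nat (prod_coeff q n mu nu h) = poly (r mu nu (utype q n h)) (qint q n)"
  shows "\<forall>mu \<in> utypes q TYPE('a). \<forall>nu \<in> utypes q TYPE('a). \<forall>la \<in> utypes q TYPE('a).
           (utype_size la > utype_size mu + utype_size nu \<longrightarrow> r mu nu la = 0) \<and>
           (utype_size la = utype_size mu + utype_size nu \<longrightarrow> (\<exists>c::int. r mu nu la = [:of_int c:]))"
proof (intro ballI conjI impI)
  obtain p k where p: "prime p" "k > 0" "q = p ^ k" using q unfolding prime_power_def by auto
  have q2: "q \<ge> 2"
  proof -
    have "p \<ge> 2" using p(1) by (simp add: prime_ge_2_nat)
    moreover have "p \<le> p ^ k"
    proof -
      obtain k' where k: "k = Suc k'" using p(2) by (cases k, auto)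
      have "0 < p ^ k'" using prime_gt_0_nat[OF p(1)] by simp
      then show ?thesis unfolding k by simp
    qed
    ultimately show ?thesis using p(3) by simp
  qed
  then have q0: "q > 0" by simp
  fix mu nu la assume mu: "mu \<in> utypes q TYPE('a)" and nu: "nu \<in> utypes q TYPE('a)"
    and la: "la \<in> utypes q TYPE('a)"
  obtain m and h0 :: "'a mat" where h0: "h0 \<in> unitary_group q m" and la_def: "la = utype q m h0"
    using la unfolding utypes_def by auto
  define hn where "hn n = embed_mat m n h0" for n
  have hnU: "hn n \<in> unitary_group q n" if "n \<ge> m" for n
    unfolding hn_def by (rule emb_unitary[OF h0 q0 that])
  have hn_type: "utype q n (hn n) = la" if "n \<ge> m" for n
    unfolding hn_def la_def by (rule utype_emb[OF h0 q0 that])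
  have hn_rank: "vec_space.rank n (hn n - 1\<^sub>m n) = utype_size la" if "n \<ge> m" for n
    using utype_size_eq[OF hnU[OF that] q0] hn_type[OF that] by simp
  have struct: "of_nat (card (pairs q n mu nu (hn n))) = poly (r mu nu la) (qint q n)" if "n \<ge> m" for n
    using r_struct[OF mu nu hnU[OF that]] hn_type[OF that] unfolding prod_coeff_pairs by simp
  {
    assume gt: "utype_size la > utype_size mu + utype_size nu"
    have "poly (r mu nu la) (qint q n) = 0" if n: "n \<ge> m" for n
    proof -
      have "pairs q n mu nu (hn n) = {}"
      proof (rule ccontr)
        assume "pairs q n mu nu (hn n) \<noteq> {}"
        then obtain a b where "(a, b) \<in> pairs q n mu nu (hn n)" by auto
        from pairs_rank_le[OF this q0] hn_rank[OF n] gt show False by simp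
      qed
      then show ?thesis using struct[OF n] by simp
    qed
    then show "r mu nu la = 0" by (rule poly_zero_from_qint[OF q2])
  }
  {
    assume eq: "utype_size la = utype_size mu + utype_size nu"
    define c where "c = card (pairs q m mu nu h0)"
    have cn: "card (pairs q n mu nu (hn n)) = c" if n: "n \<ge> m" for n
      using n
    proof (induction n rule: dec_induct)
      case base
      then show ?case unfolding c_def hn_def using emb_id[OF unitary_groupD(1)[OF h0]] by simp
    next
      case (step n)
      have "hn (Suc n) = embed_mat n (Suc n) (hn n)"
        unfolding hn_def using emb_emb[OF unitary_groupD(1)[OF h0] step(1)] by simp
      then have "card (pairs q (Suc n) mu nu (hn (Suc n))) = card (pairs q n mu nu (hn n))"
        using pairs_step[OF hnU[OF step(1)] q0] hn_rank[OF step(1)] eq by simp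
      then show ?case using step(3) by simp
    qed
    have "poly (r mu nu la - [:of_nat c:]) (qint q n) = 0" if n: "n \<ge> m" for n
      using struct[OF n] cn[OF n] by simp
    then have "r mu nu la - [:of_nat c:] = 0" by (rule poly_zero_from_qint[OF q2])
    then have "r mu nu la = [:of_int (int c):]" by simp
    then show "\<exists>c::int. r mu nu la = [:of_int c:]" by blast
  }
qed

end
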